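(* Let $u=u_1\cdots u_m$ be a quasi-strict pin word corresponding to a permutation $\pi$ and $w$ a strict pin word corresponding to a permutation $\sigma$. If $\phi(u_2\cdots u_m)$ is a factor of $\phi(w)$ beginning at a position $p\ge3$ (i.e. $\phi(w)=y\,\phi(u_2\cdots u_m)\,y'$ with $|y|\ge2$), then $\pi\le\sigma$.
   Context: Permutations of length $n$ are bijections of $\{1,\dots,n\}$, identified with their diagrams $\{(i,\sigma(i))\}$; $\pi\le\sigma$ means some subsequence of $\sigma$ is order isomorphic to $\pi$. Pins are points of $\mathbb{Z}^2$. A pin $p$ separates a set $P$ from a set $Q$ horizontally (resp. vertically) if the horizontal (resp. vertical) line through $p$ has $P$ strictly on one side and $Q$ strictly on the other. A pin sequence is a sequence $(p_1,\dots,p_k)$ of pins, no two in a common row or column, such that for every $i\ge2$, $p_i$ lies outside the bounding box of $\{p_1,\dots,p_{i-1}\}$ and either $p_i$ separates $p_{i-1}$ from $\{p_1,\dots,p_{i-2}\}$ or $p_i$ is independent from $\{p_1,\dots,p_{i-1}\}$. A pin representation of $\sigma$ is a pin sequence order isomorphic to its diagram. Pin words: given a pin representation $(p_1,\dots,p_n)$ and an origin $p_0$ such that $(p_0,\dots,p_n)$ is a pin sequence, each $p_i$ ($i\ge1$) is encoded by $U$ (resp. $D,L,R$) if $p_i$ separates $p_{i-1}$ from $\{p_0,\dots,p_{i-2}\}$ and lies above (resp. below, left of, right of) the bounding box of $\{p_0,\dots,p_{i-1}\}$, and by $1$ (resp. $2,3,4$) if $p_i$ is independent from $\{p_0,\dots,p_{i-1}\}$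 and lies in the up-right (resp. up-left, bottom-left, bottom-right) corner region of that bounding box. The word then corresponds to $\sigma$. Letters $1,2,3,4$ are numerals, $U,D,L,R$ directions. A strict pin word has length $\ge2$, a numeral first, then only directions; a quasi-strict pin word has length $\ge2$, two numerals first, then only directions. $\phi$ is defined on words consisting of a numeral followed by a nonempty word over $\{L,R,U,D\}$ alternating between $\{L,R\}$ and $\{U,D\}$, by $\phi(u'u'')=\varphi(u')u''$ for $|u'|=2$ with $\varphi$: $1R\mapsto RUR$, $2R\mapsto LUR$, $3R\mapsto LDR$, $4R\mapsto RDR$, $1L\mapsto RUL$, $2L\mapsto LUL$, $3L\mapsto LDL$, $4L\mapsto RDL$, $1U\mapsto URU$, $2U\mapsto ULU$, $3U\mapsto DLU$, $4U\mapsto DRU$, $1D\mapsto URD$, $2D\mapsto ULD$, $3D\mapsto DLD$, $4D\mapsto DRD$; on single numerals $\phi(1)=\{UR,RU\}$, $\phi(2)=\{UL,LU\}$, $\phi(3)=\{DL,LD\}$, $\phi(4)=\{RD,DR\}$ (for $m=2$ the hypothesis means some element of $\phi(u_2)$ occurs as stated). A factor is a contiguous subword; positions are numbered from $1$. *)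

theory Defs
  imports Main
begin

text \<open>A permutation of length n is a list containing each of 1..n exactly once;
  sigma ! (i-1) is sigma(i).\<close>
definition is_perm :: "nat list \<Rightarrow> bool" where
  "is_perm s \<longleftrightarrow> distinct s \<and> set s = {1..length s}"

definition patt_le :: "nat list \<Rightarrow> nat list \<Rightarrow> bool" where
  "patt_le p s \<longleftrightarrow> (\<exists>f :: nat \<Rightarrow> nat.
      (\<forall>i j. i < j \<and> j < length p \<longrightarrow> f i < f j) \<and>
      (\<forall>i < length p. f i < length s) \<and>
      (\<forall>i < length p. \<forall>j < length p. p ! i < p ! j \<longleftrightarrow> s ! (f i) < s ! (f j)))"

definition diagram :: "nat list \<Rightarrow> (int \<times> int) set" where
  "diagram s = {(int (i + 1), int (s ! i)) | i. i < length s}"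

type_synonym pin = "int \<times> int"

definition order_iso :: "(int \<times> int) set \<Rightarrow> (int \<times> int) set \<Rightarrow> bool" where
  "order_iso A B \<longleftrightarrow> (\<exists>f. bij_betw f A B \<and>
     (\<forall>p\<in>A. \<forall>q\<in>A. (fst p < fst q \<longleftrightarrow> fst (f p) < fst (f q)) \<and>
                     (snd p < snd q \<longleftrightarrow> snd (f p) < snd (f q))))"

definition sep_h :: "pin \<Rightarrow> pin set \<Rightarrow> pin set \<Rightarrow> bool" where
  "sep_h p P Q \<longleftrightarrow>
     ((\<forall>q\<in>P. snd q < snd p) \<and> (\<forall>q\<in>Q. snd p < snd q)) \<or>
     ((\<forall>q\<in>P. snd p < snd q) \<and> (\<forall>q\<in>Q. snd q < snd p))"

definition sep_v :: "pin \<Rightarrow> pin set \<Rightarrow> pin set \<Rightarrow> bool" where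
  "sep_v p P Q \<longleftrightarrow>
     ((\<forall>q\<in>P. fst q < fst p) \<and> (\<forall>q\<in>Q. fst p < fst q)) \<or>
     ((\<forall>q\<in>P. fst p < fst q) \<and> (\<forall>q\<in>Q. fst q < fst p))"

definition separates :: "pin \<Rightarrow> pin set \<Rightarrow> pin set \<Rightarrow> bool" where
  "separates p P Q \<longleftrightarrow> sep_h p P Q \<or> sep_v p P Q"

definition in_bbox :: "pin \<Rightarrow> pin set \<Rightarrow> bool" where
  "in_bbox p S \<longleftrightarrow> Min (fst ` S) \<le> fst p \<and> fst p \<le> Max (fst ` S) \<and>
                   Min (snd ` S) \<le> snd p \<and> snd p \<le> Max (snd ` S)"

definition independent :: "pin \<Rightarrow> pin set \<Rightarrow> bool" where
  "independent p P \<longleftrightarrow> \<not> in_bbox p P \<and>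
     \<not> (\<exists>A B. A \<noteq> {} \<and> B \<noteq> {} \<and> A \<union> B = P \<and> A \<inter> B = {} \<and> separates p A B)"

text \<open>Pin sequence (0-indexed list; index i here is p_(i+1) of the paper).\<close>
definition pin_seq :: "pin list \<Rightarrow> bool" where
  "pin_seq ps \<longleftrightarrow> distinct (map fst ps) \<and> distinct (map snd ps) \<and>
     (\<forall>i. 1 \<le> i \<and> i < length ps \<longrightarrow>
        \<not> in_bbox (ps ! i) (set (take i ps)) \<and>
        (separates (ps ! i) {ps ! (i - 1)} (set (take (i - 1) ps)) \<or>
         independent (ps ! i) (set (take i ps))))"

datatype letter = N1 | N2 | N3 | N4 | U | D | L | R

definition is_numeral :: "letter \<Rightarrow> bool" where
  "is_numeral c \<longleftrightarrow> c \<in> {N1, N2, N3, N4}"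

definition is_dir :: "letter \<Rightarrow> bool" where
  "is_dir c \<longleftrightarrow> c \<in> {U, D, L, R}"

definition above :: "pin \<Rightarrow> pin set \<Rightarrow> bool" where
  "above p S \<longleftrightarrow> Min (fst ` S) \<le> fst p \<and> fst p \<le> Max (fst ` S) \<and> Max (snd ` S) < snd p"
definition below :: "pin \<Rightarrow> pin set \<Rightarrow> bool" where
  "below p S \<longleftrightarrow> Min (fst ` S) \<le> fst p \<and> fst p \<le> Max (fst ` S) \<and> snd p < Min (snd ` S)"
definition left_of :: "pin \<Rightarrow> pin set \<Rightarrow> bool" where
  "left_of p S \<longleftrightarrow> Min (snd ` S) \<le> snd p \<and> snd p \<le> Max (snd ` S) \<and> fst p < Min (fst ` S)"
definition right_of :: "pin \<Rightarrow> pin set \<Rightarrow> bool" where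
  "right_of p S \<longleftrightarrow> Min (snd ` S) \<le> snd p \<and> snd p \<le> Max (snd ` S) \<and> Max (fst ` S) < fst p"

definition enc_ok :: "pin list \<Rightarrow> pin \<Rightarrow> letter \<Rightarrow> bool" where
  "enc_ok pre p c \<longleftrightarrow>
     (let S = set pre; sp = separates p {last pre} (set (butlast pre)); ind = independent p S in
      case c of
        U \<Rightarrow> sp \<and> above p S
      | D \<Rightarrow> sp \<and> below p S
      | L \<Rightarrow> sp \<and> left_of p S
      | R \<Rightarrow> sp \<and> right_of p S
      | N1 \<Rightarrow> ind \<and> Max (fst ` S) < fst p \<and> Max (snd ` S) < snd p
      | N2 \<Rightarrow> ind \<and> fst p < Min (fst ` S) \<and> Max (snd ` S) < snd p
      | N3 \<Rightarrow> ind \<and> fst p < Min (fst ` S) \<and> snd p < Min (snd ` S)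
      | N4 \<Rightarrow> ind \<and> Max (fst ` S) < fst p \<and> snd p < Min (snd ` S))"

definition corresponds :: "letter list \<Rightarrow> nat list \<Rightarrow> bool" where
  "corresponds w s \<longleftrightarrow> is_perm s \<and>
     (\<exists>p0 ps. length ps = length w \<and> pin_seq ps \<and> pin_seq (p0 # ps) \<and>
        order_iso (set ps) (diagram s) \<and>
        (\<forall>i < length w. enc_ok (take (i + 1) (p0 # ps)) (ps ! i) (w ! i)))"

definition strict_word :: "letter list \<Rightarrow> bool" where
  "strict_word w \<longleftrightarrow> length w \<ge> 2 \<and> is_numeral (w ! 0) \<and> (\<forall>c \<in> set (drop 1 w). is_dir c)"

definition quasi_strict_word :: "letter list \<Rightarrow> bool" where
  "quasi_strict_word w \<longleftrightarrow> length w \<ge> 2 \<and> is_numeral (w ! 0) \<and> is_numeral (w ! 1) \<and>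
     (\<forall>c \<in> set (drop 2 w). is_dir c)"

fun varphi :: "letter \<Rightarrow> letter \<Rightarrow> letter list" where
  "varphi N1 R = [R, U, R]" | "varphi N2 R = [L, U, R]" | "varphi N3 R = [L, D, R]" | "varphi N4 R = [R, D, R]"
| "varphi N1 L = [R, U, L]" | "varphi N2 L = [L, U, L]" | "varphi N3 L = [L, D, L]" | "varphi N4 L = [R, D, L]"
| "varphi N1 U = [U, R, U]" | "varphi N2 U = [U, L, U]" | "varphi N3 U = [D, L, U]" | "varphi N4 U = [D, R, U]"
| "varphi N1 D = [U, R, D]" | "varphi N2 D = [U, L, D]" | "varphi N3 D = [D, L, D]" | "varphi N4 D = [D, R, D]"
| "varphi _ _ = []"

fun phi :: "letter list \<Rightarrow> letter list" where
  "phi (a # b # rest) = varphi a b @ rest"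
| "phi _ = []"

fun Phi :: "letter list \<Rightarrow> letter list set" where
  "Phi [N1] = {[U, R], [R, U]}"
| "Phi [N2] = {[U, L], [L, U]}"
| "Phi [N3] = {[D, L], [L, D]}"
| "Phi [N4] = {[R, D], [D, R]}"
| "Phi (a # b # rest) = {phi (a # b # rest)}"
| "Phi _ = {}"

end

theory Submission imports Defs begin

definition realz :: "pin list \<Rightarrow> letter list \<Rightarrow> bool" where
 "realz Q w \<longleftrightarrow> distinct (map fst Q) \<and> distinct (map snd Q) \<and> length Q = length w + 1 \<and>
    is_numeral (w!0) \<and> (\<forall>k. 1 \<le> k \<and> k \<le> length w \<longrightarrow> enc_ok (take k Q) (Q!k) (w!(k-1)))"

definition xmx where "xmx c \<longleftrightarrow> c \<in> {N1,N4,R}"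
definition xmn where "xmn c \<longleftrightarrow> c \<in> {N2,N3,L}"
definition ymx where "ymx c \<longleftrightarrow> c \<in> {N1,N2,U}"
definition ymn where "ymn c \<longleftrightarrow> c \<in> {N3,N4,D}"

lemma enc_N1: "enc_ok pre p N1 \<Longrightarrow> Max (fst ` set pre) < fst p \<and> Max (snd ` set pre) < snd p"
  by (simp add: enc_ok_def Let_def)
lemma enc_N2: "enc_ok pre p N2 \<Longrightarrow> fst p < Min (fst ` set pre) \<and> Max (snd ` set pre) < snd p"
  by (simp add: enc_ok_def Let_def)
lemma enc_N3: "enc_ok pre p N3 \<Longrightarrow> fst p < Min (fst ` set pre) \<and> snd p < Min (snd ` set pre)"
  by (simp add: enc_ok_def Let_def)
lemma enc_N4: "enc_ok pre p N4 \<Longrightarrow> Max (fst ` set pre) < fst p \<and> snd p < Min (snd ` set pre)"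
  by (simp add: enc_ok_def Let_def)
lemma enc_U: "enc_ok pre p U \<Longrightarrow> separates p {last pre} (set (butlast pre)) \<and> Max (snd ` set pre) < snd p"
  by (simp add: enc_ok_def Let_def above_def)
lemma enc_D: "enc_ok pre p D \<Longrightarrow> separates p {last pre} (set (butlast pre)) \<and> snd p < Min (snd ` set pre)"
  by (simp add: enc_ok_def Let_def below_def)
lemma enc_L: "enc_ok pre p L \<Longrightarrow> separates p {last pre} (set (butlast pre)) \<and> fst p < Min (fst ` set pre)"
  by (simp add: enc_ok_def Let_def left_of_def)
lemma enc_R: "enc_ok pre p R \<Longrightarrow> separates p {last pre} (set (butlast pre)) \<and> Max (fst ` set pre) < fst p"
  by (simp add: enc_ok_def Let_def right_of_def)
lemma enc_xmx: "enc_ok pre p c \<Longrightarrow> xmx c \<Longrightarrow> Max (fst ` set pre) < fst p"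
  by (cases c) (auto simp: xmx_def dest: enc_N1 enc_N4 enc_R)
lemma enc_xmn: "enc_ok pre p c \<Longrightarrow> xmn c \<Longrightarrow> fst p < Min (fst ` set pre)"
  by (cases c) (auto simp: xmn_def dest: enc_N2 enc_N3 enc_L)
lemma enc_ymx: "enc_ok pre p c \<Longrightarrow> ymx c \<Longrightarrow> Max (snd ` set pre) < snd p"
  by (cases c) (auto simp: ymx_def dest: enc_N1 enc_N2 enc_U)
lemma enc_ymn: "enc_ok pre p c \<Longrightarrow> ymn c \<Longrightarrow> snd p < Min (snd ` set pre)"
  by (cases c) (auto simp: ymn_def dest: enc_N3 enc_N4 enc_D)
lemma enc_sep: "enc_ok pre p c \<Longrightarrow> c \<in> {U,D,L,R} \<Longrightarrow> separates p {last pre} (set (butlast pre))"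
  by (cases c) (auto dest: enc_U enc_D enc_L enc_R)

lemma in_take: "a < k \<Longrightarrow> a < length Q \<Longrightarrow> Q!a \<in> set (take k Q)"
  by (metis in_set_conv_nth length_take min_less_iff_conj nth_take)

lemma from_take: "q \<in> set (take k Q) \<Longrightarrow> \<exists>a<k. a < length Q \<and> q = Q!a"
  by (metis in_set_conv_nth length_take min_less_iff_conj nth_take)

lemma max_lt: "finite S \<Longrightarrow> x \<in> S \<Longrightarrow> Max (f`S) < (c::int) \<Longrightarrow> f x < c"
  by (meson Max_ge finite_imageI imageI le_less_trans)
lemma min_gt: "finite S \<Longrightarrow> x \<in> S \<Longrightarrow> (c::int) < Min (f`S) \<Longrightarrow> c < f x"
  by (meson Min_le finite_imageI imageI less_le_trans)

lemma lastbut: "1 \<le> k \<Longrightarrow> k \<le> length Q \<Longrightarrow> last (take k Q) = Q!(k-1) \<and> butlast (take k Q) = take (k-1) Q"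
proof -
  assume "1 \<le> k" "k \<le> length Q"
  then have "take k Q = take (k-1) Q @ [Q!(k-1)]"
    by (metis Suc_diff_1 Suc_le_eq diff_less less_one not_le take_Suc_conv_app_nth zero_less_one le_less_trans)
  then show ?thesis by (metis butlast_snoc last_snoc)
qed

lemma encQ: "realz Q w \<Longrightarrow> 1 \<le> k \<Longrightarrow> k \<le> length w \<Longrightarrow> enc_ok (take k Q) (Q!k) (w!(k-1))"
  unfolding realz_def by blast

lemma xmx_lt: assumes "realz Q w" "1 \<le> k" "k \<le> length w" "xmx (w!(k-1))" "a < k"
  shows "fst (Q!a) < fst (Q!k)"
proof -
  have e: "enc_ok (take k Q) (Q!k) (w!(k-1))" using encQ assms by blast
  have len: "length Q = length w + 1" using assms(1) by (simp add: realz_def)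
  have mem: "Q!a \<in> set (take k Q)" using in_take[of a k Q] assms(3,5) len by simp
  have "Max (fst ` set (take k Q)) < fst (Q!k)" using e assms(4)
    using enc_xmx by blast
  then show ?thesis using max_lt[OF finite_set mem] by blast
qed

lemma xmn_lt: assumes "realz Q w" "1 \<le> k" "k \<le> length w" "xmn (w!(k-1))" "a < k"
  shows "fst (Q!k) < fst (Q!a)"
proof -
  have e: "enc_ok (take k Q) (Q!k) (w!(k-1))" using encQ assms by blast
  have len: "length Q = length w + 1" using assms(1) by (simp add: realz_def)
  have mem: "Q!a \<in> set (take k Q)" using in_take[of a k Q] assms(3,5) len by simp
  have "fst (Q!k) < Min (fst ` set (take k Q))" using e assms(4)
    using enc_xmn by blast
  then show ?thesis using min_gt[OF finite_set mem] by blast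
qed

lemma ymx_lt: assumes "realz Q w" "1 \<le> k" "k \<le> length w" "ymx (w!(k-1))" "a < k"
  shows "snd (Q!a) < snd (Q!k)"
proof -
  have e: "enc_ok (take k Q) (Q!k) (w!(k-1))" using encQ assms by blast
  have len: "length Q = length w + 1" using assms(1) by (simp add: realz_def)
  have mem: "Q!a \<in> set (take k Q)" using in_take[of a k Q] assms(3,5) len by simp
  have "Max (snd ` set (take k Q)) < snd (Q!k)" using e assms(4)
    using enc_ymx by blast
  then show ?thesis using max_lt[OF finite_set mem] by blast
qed

lemma ymn_lt: assumes "realz Q w" "1 \<le> k" "k \<le> length w" "ymn (w!(k-1))" "a < k"
  shows "snd (Q!k) < snd (Q!a)"
proof -
  have e: "enc_ok (take k Q) (Q!k) (w!(k-1))" using encQ assms by blast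
  have len: "length Q = length w + 1" using assms(1) by (simp add: realz_def)
  have mem: "Q!a \<in> set (take k Q)" using in_take[of a k Q] assms(3,5) len by simp
  have "snd (Q!k) < Min (snd ` set (take k Q))" using e assms(4)
    using enc_ymn by blast
  then show ?thesis using min_gt[OF finite_set mem] by blast
qed

lemma sepQ: assumes "realz Q w" "2 \<le> k" "k \<le> length w" "w!(k-1) \<in> {U,D,L,R}"
  shows "separates (Q!k) {Q!(k-1)} (set (take (k-1) Q))"
proof -
  have e: "enc_ok (take k Q) (Q!k) (w!(k-1))" using encQ assms by simp
  have len: "length Q = length w + 1" using assms(1) by (simp add: realz_def)
  have lb: "last (take k Q) = Q!(k-1) \<and> butlast (take k Q) = take (k-1) Q"
    using lastbut[of k Q] assms len by simp
  show ?thesis using enc_sep[OF e assms(4)] lb by simp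
qed

lemma sepV: assumes "realz Q w" "2 \<le> k" "k \<le> length w" "w!(k-1) \<in> {U,D}"
  shows "(fst (Q!(k-1)) < fst (Q!k) \<and> (\<forall>a<k-1. fst (Q!k) < fst (Q!a))) \<or>
         (fst (Q!k) < fst (Q!(k-1)) \<and> (\<forall>a<k-1. fst (Q!a) < fst (Q!k)))"
proof -
  have len: "length Q = length w + 1" using assms(1) by (simp add: realz_def)
  have sp: "separates (Q!k) {Q!(k-1)} (set (take (k-1) Q))" using sepQ assms by auto
  have m0: "Q!0 \<in> set (take (k-1) Q)" using in_take[of 0 "k-1" Q] assms len by simp
  have hv: "sep_v (Q!k) {Q!(k-1)} (set (take (k-1) Q))"
  proof (cases "w!(k-1) = U")
    case True
    then have y: "\<And>a. a < k \<Longrightarrow> snd (Q!a) < snd (Q!k)" using ymx_lt[of Q w k] assms ymx_def by auto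
    have "\<not> sep_h (Q!k) {Q!(k-1)} (set (take (k-1) Q))"
      unfolding sep_h_def using y[of 0] y[of "k-1"] m0 assms(2) by force
    then show ?thesis using sp separates_def by blast
  next
    case False
    then have "w!(k-1) = D" using assms(4) by auto
    then have y: "\<And>a. a < k \<Longrightarrow> snd (Q!k) < snd (Q!a)" using ymn_lt[of Q w k] assms ymn_def by auto
    have "\<not> sep_h (Q!k) {Q!(k-1)} (set (take (k-1) Q))"
      unfolding sep_h_def using y[of 0] y[of "k-1"] m0 assms(2) by force
    then show ?thesis using sp separates_def by blast
  qed
  have "\<And>a. a < k-1 \<Longrightarrow> Q!a \<in> set (take (k-1) Q)" using len assms(3) by (intro in_take) simp_all
  then show ?thesis using hv unfolding sep_v_def by (metis singletonI)
qed

lemma sepH: assumes "realz Q w" "2 \<le> k" "k \<le> length w" "w!(k-1) \<in> {L,R}"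
  shows "(snd (Q!(k-1)) < snd (Q!k) \<and> (\<forall>a<k-1. snd (Q!k) < snd (Q!a))) \<or>
         (snd (Q!k) < snd (Q!(k-1)) \<and> (\<forall>a<k-1. snd (Q!a) < snd (Q!k)))"
proof -
  have len: "length Q = length w + 1" using assms(1) by (simp add: realz_def)
  have sp: "separates (Q!k) {Q!(k-1)} (set (take (k-1) Q))" using sepQ assms by auto
  have m0: "Q!0 \<in> set (take (k-1) Q)" using in_take[of 0 "k-1" Q] assms len by simp
  have hv: "sep_h (Q!k) {Q!(k-1)} (set (take (k-1) Q))"
  proof (cases "w!(k-1) = R")
    case True
    then have y: "\<And>a. a < k \<Longrightarrow> fst (Q!a) < fst (Q!k)" using xmx_lt[of Q w k] assms xmx_def by auto
    have "\<not> sep_v (Q!k) {Q!(k-1)} (set (take (k-1) Q))"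
      unfolding sep_v_def using y[of 0] y[of "k-1"] m0 assms(2) by force
    then show ?thesis using sp separates_def by blast
  next
    case False
    then have "w!(k-1) = L" using assms(4) by auto
    then have y: "\<And>a. a < k \<Longrightarrow> fst (Q!k) < fst (Q!a)" using xmn_lt[of Q w k] assms xmn_def by auto
    have "\<not> sep_v (Q!k) {Q!(k-1)} (set (take (k-1) Q))"
      unfolding sep_v_def using y[of 0] y[of "k-1"] m0 assms(2) by force
    then show ?thesis using sp separates_def by blast
  qed
  have "\<And>a. a < k-1 \<Longrightarrow> Q!a \<in> set (take (k-1) Q)" using len assms(3) by (intro in_take) simp_all
  then show ?thesis using hv unfolding sep_h_def by (metis singletonI)
qed


lemma letter_cases3: "xmx c \<or> xmn c \<or> c \<in> {U,D}"
  by (cases c) (auto simp: xmx_def xmn_def)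
lemma letter_cases3y: "ymx c \<or> ymn c \<or> c \<in> {L,R}"
  by (cases c) (auto simp: ymx_def ymn_def)

lemma sideV: assumes "realz Q w" "2 \<le> k" "k \<le> length w" "w!(k-1) \<in> {U,D}" "a < k"
  shows "(fst (Q!a) < fst (Q!k)) = (if a = k-1 then xmn (w!(k-2)) else xmx (w!(k-2)))"
proof -
  have sv: "(fst (Q!(k-1)) < fst (Q!k) \<and> (\<forall>a<k-1. fst (Q!k) < fst (Q!a))) \<or>
         (fst (Q!k) < fst (Q!(k-1)) \<and> (\<forall>a<k-1. fst (Q!a) < fst (Q!k)))"
    using sepV assms by blast
  have km: "k - 1 - 1 = k - 2" by simp
  consider "xmx (w!(k-2))" | "xmn (w!(k-2))" | "w!(k-2) \<in> {U,D}" using letter_cases3 by blast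
  then show ?thesis
  proof cases
    case 1
    have pm: "\<And>b. b < k-1 \<Longrightarrow> fst (Q!b) < fst (Q!(k-1))"
      using xmx_lt[of Q w "k-1"] assms 1 km by auto
    have nx: "\<not> xmn (w!(k-2))" using 1 by (auto simp: xmx_def xmn_def)
    have "fst (Q!k) < fst (Q!(k-1)) \<and> (\<forall>a<k-1. fst (Q!a) < fst (Q!k))"
      using sv pm[of 0] assms(2) by fastforce
    note cc = this
    have "a \<noteq> k-1 \<Longrightarrow> a < k-1" using assms(5) by linarith
    then show ?thesis using nx 1 cc by force
  next
    case 2
    have pm: "\<And>b. b < k-1 \<Longrightarrow> fst (Q!(k-1)) < fst (Q!b)"
      using xmn_lt[of Q w "k-1"] assms 2 km by auto
    have nx: "\<not> xmx (w!(k-2))" using 2 by (auto simp: xmx_def xmn_def)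
    have "fst (Q!(k-1)) < fst (Q!k) \<and> (\<forall>a<k-1. fst (Q!k) < fst (Q!a))"
      using sv pm[of 0] assms(2) by fastforce
    note cc = this
    have "a \<noteq> k-1 \<Longrightarrow> a < k-1" using assms(5) by linarith
    then show ?thesis using nx 2 cc by force
  next
    case 3
    have "is_numeral (w!0)" using assms(1) by (simp add: realz_def)
    then have "k - 2 \<noteq> 0" using 3 by (auto simp: is_numeral_def)
    then have k3: "3 \<le> k" by simp
    have sv2: "(fst (Q!(k-1-1)) < fst (Q!(k-1)) \<and> (\<forall>a<k-1-1. fst (Q!(k-1)) < fst (Q!a))) \<or>
         (fst (Q!(k-1)) < fst (Q!(k-1-1)) \<and> (\<forall>a<k-1-1. fst (Q!a) < fst (Q!(k-1))))"
      using sepV[of Q w "k-1"] assms k3 3 km by auto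
    have i1: "k - 2 < k - 1" "0 < k - 1" "0 < k - 2" using k3 by auto
    show ?thesis using sv sv2 km i1 by (smt (verit))
  qed
qed

lemma sideH: assumes "realz Q w" "2 \<le> k" "k \<le> length w" "w!(k-1) \<in> {L,R}" "a < k"
  shows "(snd (Q!a) < snd (Q!k)) = (if a = k-1 then ymn (w!(k-2)) else ymx (w!(k-2)))"
proof -
  have sv: "(snd (Q!(k-1)) < snd (Q!k) \<and> (\<forall>a<k-1. snd (Q!k) < snd (Q!a))) \<or>
         (snd (Q!k) < snd (Q!(k-1)) \<and> (\<forall>a<k-1. snd (Q!a) < snd (Q!k)))"
    using sepH assms by blast
  have km: "k - 1 - 1 = k - 2" by simp
  consider "ymx (w!(k-2))" | "ymn (w!(k-2))" | "w!(k-2) \<in> {L,R}" using letter_cases3y by blast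
  then show ?thesis
  proof cases
    case 1
    have pm: "\<And>b. b < k-1 \<Longrightarrow> snd (Q!b) < snd (Q!(k-1))"
      using ymx_lt[of Q w "k-1"] assms 1 km by auto
    have nx: "\<not> ymn (w!(k-2))" using 1 by (auto simp: ymx_def ymn_def)
    have "snd (Q!k) < snd (Q!(k-1)) \<and> (\<forall>a<k-1. snd (Q!a) < snd (Q!k))"
      using sv pm[of 0] assms(2) by fastforce
    note cc = this
    have "a \<noteq> k-1 \<Longrightarrow> a < k-1" using assms(5) by linarith
    then show ?thesis using nx 1 cc by force
  next
    case 2
    have pm: "\<And>b. b < k-1 \<Longrightarrow> snd (Q!(k-1)) < snd (Q!b)"
      using ymn_lt[of Q w "k-1"] assms 2 km by auto
    have nx: "\<not> ymx (w!(k-2))" using 2 by (auto simp: ymx_def ymn_def)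
    have "snd (Q!(k-1)) < snd (Q!k) \<and> (\<forall>a<k-1. snd (Q!k) < snd (Q!a))"
      using sv pm[of 0] assms(2) by fastforce
    note cc = this
    have "a \<noteq> k-1 \<Longrightarrow> a < k-1" using assms(5) by linarith
    then show ?thesis using nx 2 cc by force
  next
    case 3
    have "is_numeral (w!0)" using assms(1) by (simp add: realz_def)
    then have "k - 2 \<noteq> 0" using 3 by (auto simp: is_numeral_def)
    then have k3: "3 \<le> k" by simp
    have sv2: "(snd (Q!(k-1-1)) < snd (Q!(k-1)) \<and> (\<forall>a<k-1-1. snd (Q!(k-1)) < snd (Q!a))) \<or>
         (snd (Q!(k-1)) < snd (Q!(k-1-1)) \<and> (\<forall>a<k-1-1. snd (Q!a) < snd (Q!(k-1))))"
      using sepH[of Q w "k-1"] assms k3 3 km by auto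
    have i1: "k - 2 < k - 1" "0 < k - 1" "0 < k - 2" using k3 by auto
    show ?thesis using sv sv2 km i1 by (smt (verit))
  qed
qed

fun relx :: "letter \<Rightarrow> letter \<Rightarrow> bool \<Rightarrow> bool" where
  "relx p N1 adj = True" | "relx p N2 adj = False" | "relx p N3 adj = False" | "relx p N4 adj = True"
| "relx p R adj = True" | "relx p L adj = False"
| "relx p U adj = (if adj then xmn p else xmx p)" | "relx p D adj = (if adj then xmn p else xmx p)"

fun rely :: "letter \<Rightarrow> letter \<Rightarrow> bool \<Rightarrow> bool" where
  "rely p N1 adj = True" | "rely p N2 adj = True" | "rely p N3 adj = False" | "rely p N4 adj = False"
| "rely p U adj = True" | "rely p D adj = False"
| "rely p R adj = (if adj then ymn p else ymx p)" | "rely p L adj = (if adj then ymn p else ymx p)"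

lemma KEY: assumes "realz Q w" "1 \<le> k" "k \<le> length w" "a < k"
  shows "(fst (Q!a) < fst (Q!k) \<longleftrightarrow> relx (w!(k-2)) (w!(k-1)) (a = k-1)) \<and>
         (snd (Q!a) < snd (Q!k) \<longleftrightarrow> rely (w!(k-2)) (w!(k-1)) (a = k-1))"
proof -
  have xa: "xmx (w!(k-1)) \<Longrightarrow> fst (Q!a) < fst (Q!k)" using xmx_lt assms by blast
  have xb: "xmn (w!(k-1)) \<Longrightarrow> \<not> fst (Q!a) < fst (Q!k)" using xmn_lt assms by fastforce
  have ya: "ymx (w!(k-1)) \<Longrightarrow> snd (Q!a) < snd (Q!k)" using ymx_lt assms by blast
  have yb: "ymn (w!(k-1)) \<Longrightarrow> \<not> snd (Q!a) < snd (Q!k)" using ymn_lt assms by fastforce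
  have k2: "\<not> is_numeral (w!(k-1)) \<Longrightarrow> 2 \<le> k"
  proof (rule ccontr)
    assume "\<not> is_numeral (w!(k-1))" "\<not> 2 \<le> k"
    then have "k = 1" using assms by simp
    then show False using \<open>\<not> is_numeral (w!(k-1))\<close> assms(1) by (simp add: realz_def)
  qed
  have sv: "w!(k-1) \<in> {U,D} \<Longrightarrow> (fst (Q!a) < fst (Q!k)) = (if a = k-1 then xmn (w!(k-2)) else xmx (w!(k-2)))"
    using sideV[of Q w k a] assms k2 by (auto simp: is_numeral_def)
  have sh: "w!(k-1) \<in> {L,R} \<Longrightarrow> (snd (Q!a) < snd (Q!k)) = (if a = k-1 then ymn (w!(k-2)) else ymx (w!(k-2)))"
    using sideH[of Q w k a] assms k2 by (auto simp: is_numeral_def)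
  show ?thesis
    by (cases "w!(k-1)") (use xa xb ya yb sv sh in \<open>auto simp: xmx_def xmn_def ymx_def ymn_def\<close>)
qed


lemma patt_emb:
  assumes h1: "order_iso (set A) (diagram p)" and h2: "order_iso (set B) (diagram s)"
    and f: "\<forall>i<length A. f i < length B"
    and c: "\<forall>i<length A. \<forall>j<length A. (fst (A!i) < fst (A!j) \<longleftrightarrow> fst (B!f i) < fst (B!f j)) \<and>
                                      (snd (A!i) < snd (A!j) \<longleftrightarrow> snd (B!f i) < snd (B!f j))"
  shows "patt_le p s"
proof -
  obtain g1 where g1: "bij_betw g1 (set A) (diagram p)" and
    g1p: "\<forall>x\<in>set A. \<forall>y\<in>set A. (fst x < fst y \<longleftrightarrow> fst (g1 x) < fst (g1 y)) \<and> (snd x < snd y \<longleftrightarrow> snd (g1 x) < snd (g1 y))"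
    using h1 order_iso_def by blast
  obtain g2 where g2: "bij_betw g2 (set B) (diagram s)" and
    g2p: "\<forall>x\<in>set B. \<forall>y\<in>set B. (fst x < fst y \<longleftrightarrow> fst (g2 x) < fst (g2 y)) \<and> (snd x < snd y \<longleftrightarrow> snd (g2 x) < snd (g2 y))"
    using h2 order_iso_def by blast
  define d where "d i = (int (i+1), int (p!i))" for i
  have dmem: "\<And>i. i < length p \<Longrightarrow> d i \<in> diagram p" by (auto simp: diagram_def d_def)
  define x where "x i = inv_into (set A) g1 (d i)" for i
  have xm: "\<And>i. i < length p \<Longrightarrow> x i \<in> set A \<and> g1 (x i) = d i"
  proof -
    fix i assume "i < length p"
    then have "d i \<in> g1 ` set A" using dmem g1 bij_betw_imp_surj_on by blast
    then show "x i \<in> set A \<and> g1 (x i) = d i" unfolding x_def by (simp add: inv_into_into f_inv_into_f)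
  qed
  define \<alpha> where "\<alpha> i = (SOME j. j < length A \<and> A!j = x i)" for i
  have ap: "\<And>i. i < length p \<Longrightarrow> \<alpha> i < length A \<and> A!(\<alpha> i) = x i"
  proof -
    fix i assume "i < length p"
    then have "\<exists>j. j < length A \<and> A!j = x i" using xm by (metis in_set_conv_nth)
    then show "\<alpha> i < length A \<and> A!(\<alpha> i) = x i" unfolding \<alpha>_def by (rule someI_ex)
  qed
  define e where "e i = g2 (B ! f (\<alpha> i))" for i
  have em: "\<And>i. i < length p \<Longrightarrow> e i \<in> diagram s"
    unfolding e_def using ap f g2 bij_betw_apply nth_mem by metis
  define G where "G i = (SOME j. j < length s \<and> e i = (int (j+1), int (s!j)))" for i
  have Gp: "\<And>i. i < length p \<Longrightarrow> G i < length s \<and> e i = (int (G i+1), int (s!(G i)))"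
  proof -
    fix i assume "i < length p"
    then have "\<exists>j. j < length s \<and> e i = (int (j+1), int (s!j))" using em unfolding diagram_def by blast
    then show "G i < length s \<and> e i = (int (G i+1), int (s!(G i)))" unfolding G_def by (rule someI_ex)
  qed
  have key: "\<And>i j. i < length p \<Longrightarrow> j < length p \<Longrightarrow>
     (fst (d i) < fst (d j) \<longleftrightarrow> fst (e i) < fst (e j)) \<and> (snd (d i) < snd (d j) \<longleftrightarrow> snd (e i) < snd (e j))"
  proof -
    fix i j assume i: "i < length p" and j: "j < length p"
    have bi: "B ! f (\<alpha> i) \<in> set B" "B ! f (\<alpha> j) \<in> set B" using ap f i j by auto
    have "(fst (d i) < fst (d j) \<longleftrightarrow> fst (x i) < fst (x j)) \<and> (snd (d i) < snd (d j) \<longleftrightarrow> snd (x i) < snd (x j))"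
      using g1p xm i j by metis
    moreover have "(fst (x i) < fst (x j) \<longleftrightarrow> fst (B ! f (\<alpha> i)) < fst (B ! f (\<alpha> j))) \<and>
                   (snd (x i) < snd (x j) \<longleftrightarrow> snd (B ! f (\<alpha> i)) < snd (B ! f (\<alpha> j)))"
      using c ap i j by metis
    moreover have "(fst (B ! f (\<alpha> i)) < fst (B ! f (\<alpha> j)) \<longleftrightarrow> fst (e i) < fst (e j)) \<and>
                   (snd (B ! f (\<alpha> i)) < snd (B ! f (\<alpha> j)) \<longleftrightarrow> snd (e i) < snd (e j))"
      unfolding e_def using g2p bi by blast
    ultimately show "(fst (d i) < fst (d j) \<longleftrightarrow> fst (e i) < fst (e j)) \<and> (snd (d i) < snd (d j) \<longleftrightarrow> snd (e i) < snd (e j))"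
      by blast
  qed
  show ?thesis unfolding patt_le_def
  proof (intro exI conjI allI impI)
    fix i j assume "i < j \<and> j < length p"
    then have "fst (d i) < fst (d j)" "i < length p" "j < length p" by (auto simp: d_def)
    then show "G i < G j" using key Gp by fastforce
  next
    fix i assume "i < length p" then show "G i < length s" using Gp by blast
  next
    fix i j assume i: "i < length p" and j: "j < length p"
    have "(p!i < p!j) = (snd (d i) < snd (d j))" by (simp add: d_def)
    also have "\<dots> = (snd (e i) < snd (e j))" using key i j by blast
    also have "\<dots> = (s!(G i) < s!(G j))" using Gp i j by simp
    finally show "(p!i < p!j) = (s!(G i) < s!(G j))" .
  qed
qed

lemma corr_realz: assumes "corresponds w s" "is_numeral (w!0)"
  shows "\<exists>p0 ps. length ps = length w \<and> order_iso (set ps) (diagram s) \<and> realz (p0#ps) w"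
proof -
  obtain p0 ps where l: "length ps = length w" and ps: "pin_seq (p0 # ps)" and o: "order_iso (set ps) (diagram s)"
    and e: "\<forall>i < length w. enc_ok (take (i + 1) (p0 # ps)) (ps ! i) (w ! i)"
    using assms(1) unfolding corresponds_def by blast
  have "\<forall>k. 1 \<le> k \<and> k \<le> length w \<longrightarrow> enc_ok (take k (p0#ps)) ((p0#ps)!k) (w!(k-1))"
  proof (intro allI impI)
    fix k assume k: "1 \<le> k \<and> k \<le> length w"
    then obtain k' where k': "k = Suc k'" by (cases k) auto
    show "enc_ok (take k (p0#ps)) ((p0#ps)!k) (w!(k-1))" using e k k' by simp
  qed
  moreover have "distinct (map fst (p0#ps)) \<and> distinct (map snd (p0#ps))" using ps unfolding pin_seq_def by blast
  ultimately have "realz (p0#ps) w" using l assms(2) unfolding realz_def by simp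
  then show ?thesis using l o by blast
qed

lemma phi_nth: assumes "strict_word w"
  shows "length (phi w) = length w + 1 \<and> (\<forall>j. 2 \<le> j \<longrightarrow> j < length w + 1 \<longrightarrow> phi w ! j = w!(j-1))"
proof -
  obtain a b rest where w: "w = a#b#rest" using assms unfolding strict_word_def
    by (metis One_nat_def Suc_1 Suc_le_length_iff)
  have na: "is_numeral a" using assms w strict_word_def by auto
  have nb: "is_dir b" using assms w strict_word_def by auto
  have "\<exists>x y. varphi a b = [x,y,b]" using na nb
    by (cases a; cases b) (auto simp: is_numeral_def is_dir_def)
  then obtain x y where v: "varphi a b = [x,y,b]" by blast
  have pw: "phi w = x # y # b # rest" using w v by simp
  show ?thesis
  proof (intro conjI allI impI)
    show "length (phi w) = length w + 1" using pw w by simp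
  next
    fix j assume "2 \<le> j" "j < length w + 1"
    then obtain j' where "j = Suc (Suc j')" by (metis add_2_eq_Suc le_Suc_ex)
    then show "phi w ! j = w!(j-1)" using pw w by simp
  qed
qed

lemma tab2: "is_numeral x \<Longrightarrow> is_dir y \<Longrightarrow> V = varphi x y \<Longrightarrow>
   relx p x adj = relx (V!0) (V!1) False \<and> rely p x adj = rely (V!0) (V!1) False"
  by (cases x; cases y) (auto simp: is_numeral_def is_dir_def xmx_def xmn_def ymx_def ymn_def)

lemma tab3: "is_numeral x \<Longrightarrow> is_dir y \<Longrightarrow>
   relx x y adj = relx (varphi x y!1) y adj \<and> rely x y adj = rely (varphi x y!1) y adj"
  by (cases x; cases y) (auto simp: is_numeral_def is_dir_def xmx_def xmn_def ymx_def ymn_def)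

lemma tabP: "is_numeral x \<Longrightarrow> V \<in> Phi [x] \<Longrightarrow>
   length V = 2 \<and> relx p x adj = relx (V!0) (V!1) False \<and> rely p x adj = rely (V!0) (V!1) False"
  by (cases x) (auto simp: is_numeral_def xmx_def xmn_def ymx_def ymn_def)

lemma vlen: "is_numeral x \<Longrightarrow> is_dir y \<Longrightarrow> length (varphi x y) = 3 \<and> varphi x y ! 2 = y"
  by (cases x; cases y) (auto simp: is_numeral_def is_dir_def)


lemma claim_tab:
  assumes q: "quasi_strict_word u" and v: "v \<in> Phi (drop 1 u)"
  shows "length v = length u \<and> (\<forall>a b. 1 \<le> a \<and> a < b \<and> b \<le> length u \<longrightarrow>
     relx (u!(b-2)) (u!(b-1)) (a = b-1) = relx (v!(b-2)) (v!(b-1)) (2 \<le> a \<and> a = b-1) \<and>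
     rely (u!(b-2)) (u!(b-1)) (a = b-1) = rely (v!(b-2)) (v!(b-1)) (2 \<le> a \<and> a = b-1))"
proof (cases "length u = 2")
  case True
  then obtain x0 x1 where u: "u = [x0,x1]" by (metis One_nat_def Suc_1 length_0_conv length_Suc_conv)
  have n1: "is_numeral x1" using q u quasi_strict_word_def by auto
  have vP: "v \<in> Phi [x1]" using v u by simp
  show ?thesis
  proof (intro conjI allI impI)
    show "length v = length u" using tabP[OF n1 vP] u by simp
  next
    fix a b assume ab: "1 \<le> a \<and> a < b \<and> b \<le> length u"
    then have "b = 2" "a = 1" using True by auto
    then show "relx (u!(b-2)) (u!(b-1)) (a = b-1) = relx (v!(b-2)) (v!(b-1)) (2 \<le> a \<and> a = b-1)"
         "rely (u!(b-2)) (u!(b-1)) (a = b-1) = rely (v!(b-2)) (v!(b-1)) (2 \<le> a \<and> a = b-1)"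
      using tabP[OF n1 vP] u by auto
  qed
next
  case False
  then have m3: "3 \<le> length u" using q quasi_strict_word_def by auto
  then obtain x0 x1 x2 rest where u: "u = x0#x1#x2#rest"
    by (metis Suc_le_length_iff numeral_3_eq_3)
  have n1: "is_numeral x1" using q u quasi_strict_word_def by auto
  have d2: "is_dir x2" using q u quasi_strict_word_def by auto
  have vv: "v = varphi x1 x2 @ rest" using v u by simp
  obtain l3 p2 where vl: "length (varphi x1 x2) = 3" "varphi x1 x2 ! 2 = x2" using vlen[OF n1 d2] by blast
  have vi: "\<And>i. 2 \<le> i \<Longrightarrow> i < length u \<Longrightarrow> v!i = u!i"
  proof -
    fix i assume i: "2 \<le> i" "i < length u"
    show "v!i = u!i"
    proof (cases "i = 2")
      case True then show ?thesis using vv vl u by (simp add: nth_append)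
    next
      case False
      have u': "u = [x0,x1,x2] @ rest" using u by simp
      have "v!i = rest!(i-3)" using vv vl i False by (simp add: nth_append)
      moreover have "u!i = rest!(i-3)" using u' i False by (simp add: nth_append numeral_3_eq_3)
      ultimately show ?thesis by simp
    qed
  qed
  show ?thesis
  proof (intro conjI allI impI)
    show "length v = length u" using vv vl u by simp
  next
    fix a b assume ab: "1 \<le> a \<and> a < b \<and> b \<le> length u"
    consider "b = 2" | "b = 3" | "4 \<le> b" using ab by linarith
    then have "relx (u!(b-2)) (u!(b-1)) (a = b-1) = relx (v!(b-2)) (v!(b-1)) (2 \<le> a \<and> a = b-1) \<and>
      rely (u!(b-2)) (u!(b-1)) (a = b-1) = rely (v!(b-2)) (v!(b-1)) (2 \<le> a \<and> a = b-1)"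
    proof cases
      case 1
      have "v!0 = varphi x1 x2 ! 0" "v!1 = varphi x1 x2 ! 1" using vv vl by (auto simp: nth_append)
      then show ?thesis using 1 ab tab2[OF n1 d2 refl, of "u!0" "a=b-1"] u by auto
    next
      case 2
      have "v!1 = varphi x1 x2 ! 1" "v!2 = x2" using vv vl by (auto simp: nth_append)
      moreover have "(2 \<le> a \<and> a = b-1) = (a = 2)" "(a = b-1) = (a = 2)" "b - 2 = 1" "b - 1 = 2" using 2 ab by auto
      moreover have "u!1 = x1" "u!2 = x2" using u by auto
      ultimately show ?thesis using tab3[OF n1 d2, of "a = 2"] by simp
    next
      case 3
      then have "v!(b-2) = u!(b-2)" "v!(b-1) = u!(b-1)" using vi ab by auto
      moreover have "(2 \<le> a \<and> a = b-1) = (a = b-1)" using 3 ab by auto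
      ultimately show ?thesis by simp
    qed
    then show "relx (u!(b-2)) (u!(b-1)) (a = b-1) = relx (v!(b-2)) (v!(b-1)) (2 \<le> a \<and> a = b-1)"
         "rely (u!(b-2)) (u!(b-1)) (a = b-1) = rely (v!(b-2)) (v!(b-1)) (2 \<le> a \<and> a = b-1)" by auto
  qed
qed

lemma dist_fst: "distinct (map fst LL) \<Longrightarrow> i < length LL \<Longrightarrow> j < length LL \<Longrightarrow> i \<noteq> j \<Longrightarrow> fst (LL!i) \<noteq> fst (LL!j)"
  using nth_eq_iff_index_eq[of "map fst LL" i j] by simp
lemma dist_snd: "distinct (map snd LL) \<Longrightarrow> i < length LL \<Longrightarrow> j < length LL \<Longrightarrow> i \<noteq> j \<Longrightarrow> snd (LL!i) \<noteq> snd (LL!j)"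
  using nth_eq_iff_index_eq[of "map snd LL" i j] by simp

theorem lemma9:
  fixes u w :: "letter list" and \<pi> \<sigma> :: "nat list"
  assumes "quasi_strict_word u" and "corresponds u \<pi>"
    and "strict_word w" and "corresponds w \<sigma>"
    and "\<exists>y v y'. v \<in> Phi (drop 1 u) \<and> phi w = y @ v @ y' \<and> length y \<ge> 2"
  shows "patt_le \<pi> \<sigma>"
proof -
  obtain p0 ps where lp: "length ps = length u" and op: "order_iso (set ps) (diagram \<pi>)" and RP: "realz (p0#ps) u"
    using corr_realz[OF assms(2)] assms(1) quasi_strict_word_def by blast
  obtain q0 qs where lq: "length qs = length w" and oq: "order_iso (set qs) (diagram \<sigma>)" and RQ: "realz (q0#qs) w"
    using corr_realz[OF assms(4)] assms(3) strict_word_def by blast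
  obtain y v y' where v: "v \<in> Phi (drop 1 u)" and pw: "phi w = y @ v @ y'" and ly: "length y \<ge> 2"
    using assms(5) by blast
  define m where "m = length u"
  have ct: "length v = m \<and> (\<forall>a b. 1 \<le> a \<and> a < b \<and> b \<le> m \<longrightarrow>
     relx (u!(b-2)) (u!(b-1)) (a = b-1) = relx (v!(b-2)) (v!(b-1)) (2 \<le> a \<and> a = b-1) \<and>
     rely (u!(b-2)) (u!(b-1)) (a = b-1) = rely (v!(b-2)) (v!(b-1)) (2 \<le> a \<and> a = b-1))"
    using claim_tab[OF assms(1) v] m_def by simp
  define s where "s = length y - 1"
  have phn: "length (phi w) = length w + 1 \<and> (\<forall>j. 2 \<le> j \<longrightarrow> j < length w + 1 \<longrightarrow> phi w ! j = w!(j-1))"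
    using phi_nth[OF assms(3)] .
  have sm: "s + m \<le> length w"
  proof -
    have "length y + length v \<le> length (phi w)" using pw by simp
    then show ?thesis using phn ct ly s_def by simp
  qed
  have s1: "1 \<le> s" using ly s_def by simp
  have wv: "\<And>i. i < m \<Longrightarrow> w!(s+i) = v!i"
  proof -
    fix i assume i: "i < m"
    have "phi w ! (length y + i) = v!i" using pw i ct by (simp add: nth_append)
    moreover have "phi w ! (length y + i) = w!(length y + i - 1)" using phn ly sm i s_def by simp
    ultimately show "w!(s+i) = v!i" using s_def ly by simp
  qed
  define F where "F a = (if a = 1 then s else s + a)" for a
  have mP: "length (p0#ps) = m + 1" using lp m_def by simp
  have lw: "length w = length qs" using lq by simp
  have cmp: "\<And>a b. 1 \<le> a \<Longrightarrow> a < b \<Longrightarrow> b \<le> m \<Longrightarrow>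
     (fst ((p0#ps)!a) < fst ((p0#ps)!b) \<longleftrightarrow> fst ((q0#qs)!F a) < fst ((q0#qs)!F b)) \<and>
     (snd ((p0#ps)!a) < snd ((p0#ps)!b) \<longleftrightarrow> snd ((q0#qs)!F a) < snd ((q0#qs)!F b))"
  proof -
    fix a b assume a: "1 \<le> a" and ab: "a < b" and b: "b \<le> m"
    have KP: "(fst ((p0#ps)!a) < fst ((p0#ps)!b) \<longleftrightarrow> relx (u!(b-2)) (u!(b-1)) (a = b-1)) \<and>
         (snd ((p0#ps)!a) < snd ((p0#ps)!b) \<longleftrightarrow> rely (u!(b-2)) (u!(b-1)) (a = b-1))"
      using KEY[OF RP, of b a] a ab b m_def by simp
    have Fb: "F b = s + b" using F_def a ab by simp
    have Fa: "F a < s + b" using F_def a ab by simp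
    have KQ: "(fst ((q0#qs)!F a) < fst ((q0#qs)!(s+b)) \<longleftrightarrow> relx (w!(s+b-2)) (w!(s+b-1)) (F a = s+b-1)) \<and>
         (snd ((q0#qs)!F a) < snd ((q0#qs)!(s+b)) \<longleftrightarrow> rely (w!(s+b-2)) (w!(s+b-1)) (F a = s+b-1))"
      using KEY[OF RQ, of "s+b" "F a"] Fa sm b by simp
    have w1: "w!(s+b-2) = v!(b-2)" using wv[of "b-2"] a ab b by (simp add: algebra_simps)
    have w2: "w!(s+b-1) = v!(b-1)" using wv[of "b-1"] a ab b by (simp add: algebra_simps)
    have adj: "(F a = s+b-1) = (2 \<le> a \<and> a = b-1)" using F_def a ab by auto
    show "(fst ((p0#ps)!a) < fst ((p0#ps)!b) \<longleftrightarrow> fst ((q0#qs)!F a) < fst ((q0#qs)!F b)) \<and>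
     (snd ((p0#ps)!a) < snd ((p0#ps)!b) \<longleftrightarrow> snd ((q0#qs)!F a) < snd ((q0#qs)!F b))"
      using KP KQ Fb w1 w2 adj ct a ab b by simp
  qed
  have dP: "distinct (map fst (p0#ps))" "distinct (map snd (p0#ps))" using RP by (simp_all add: realz_def)
  have dQ: "distinct (map fst (q0#qs))" "distinct (map snd (q0#qs))" using RQ by (simp_all add: realz_def)
  have Frange: "\<And>a. 1 \<le> a \<Longrightarrow> a \<le> m \<Longrightarrow> 1 \<le> F a \<and> F a < length (q0#qs)" using F_def s1 sm lq by auto
  have Finj: "\<And>a b. 1 \<le> a \<Longrightarrow> 1 \<le> b \<Longrightarrow> a \<noteq> b \<Longrightarrow> F a \<noteq> F b" using F_def by auto
  have cmp2: "\<And>a b. 1 \<le> a \<Longrightarrow> a \<le> m \<Longrightarrow> 1 \<le> b \<Longrightarrow> b \<le> m \<Longrightarrow>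
     (fst ((p0#ps)!a) < fst ((p0#ps)!b) \<longleftrightarrow> fst ((q0#qs)!F a) < fst ((q0#qs)!F b)) \<and>
     (snd ((p0#ps)!a) < snd ((p0#ps)!b) \<longleftrightarrow> snd ((q0#qs)!F a) < snd ((q0#qs)!F b))"
  proof -
    fix a b assume a: "1 \<le> a" "a \<le> m" and b: "1 \<le> b" "b \<le> m"
    consider "a < b" | "a = b" | "b < a" by linarith
    then show "(fst ((p0#ps)!a) < fst ((p0#ps)!b) \<longleftrightarrow> fst ((q0#qs)!F a) < fst ((q0#qs)!F b)) \<and>
     (snd ((p0#ps)!a) < snd ((p0#ps)!b) \<longleftrightarrow> snd ((q0#qs)!F a) < snd ((q0#qs)!F b))"
    proof cases
      case 1 then show ?thesis using cmp a b by blast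
    next
      case 2 then show ?thesis by simp
    next
      case 3
      have c: "(fst ((p0#ps)!b) < fst ((p0#ps)!a) \<longleftrightarrow> fst ((q0#qs)!F b) < fst ((q0#qs)!F a)) \<and>
        (snd ((p0#ps)!b) < snd ((p0#ps)!a) \<longleftrightarrow> snd ((q0#qs)!F b) < snd ((q0#qs)!F a))"
        using cmp 3 a b by blast
      have ia: "a < length (p0#ps)" "b < length (p0#ps)" "a \<noteq> b" using a b 3 mP by auto
      have n1: "fst ((p0#ps)!a) \<noteq> fst ((p0#ps)!b)" "snd ((p0#ps)!a) \<noteq> snd ((p0#ps)!b)"
        using dist_fst[OF dP(1) ia] dist_snd[OF dP(2) ia] by blast+
      have n2: "fst ((q0#qs)!F a) \<noteq> fst ((q0#qs)!F b)" "snd ((q0#qs)!F a) \<noteq> snd ((q0#qs)!F b)"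
        using dist_fst[OF dQ(1)] dist_snd[OF dQ(2)] Frange Finj a b 3 by (metis less_irrefl)+
      show ?thesis using c n1 n2 by auto
    qed
  qed
  define f where "f i = F (i+1) - 1" for i
  show ?thesis
  proof (rule patt_emb[OF op oq])
    show "\<forall>i<length ps. f i < length qs"
    proof (intro allI impI)
      fix i assume "i < length ps"
      then have "1 \<le> F (i+1) \<and> F (i+1) < length (q0#qs)" using Frange lp m_def by simp
      then show "f i < length qs" unfolding f_def by (simp, arith)
    qed
  next
    have "\<And>i. i < length ps \<Longrightarrow> qs ! f i = (q0#qs) ! F (i+1) \<and> ps!i = (p0#ps)!(i+1)"
    proof -
      fix i assume "i < length ps"
      then have "1 \<le> F (i+1)" using Frange lp m_def by simp
      then show "qs ! f i = (q0#qs) ! F (i+1) \<and> ps!i = (p0#ps)!(i+1)" unfolding f_def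
        by (metis Suc_eq_plus1 Suc_pred' less_le_trans nth_Cons_Suc zero_less_one)
    qed
    note eqs = this
    show "\<forall>i<length ps. \<forall>j<length ps. (fst (ps!i) < fst (ps!j) \<longleftrightarrow> fst (qs!f i) < fst (qs!f j)) \<and>
                                      (snd (ps!i) < snd (ps!j) \<longleftrightarrow> snd (qs!f i) < snd (qs!f j))"
    proof (intro allI impI)
      fix i j assume i: "i < length ps" and j: "j < length ps"
      have c: "(fst ((p0#ps)!(i+1)) < fst ((p0#ps)!(j+1)) \<longleftrightarrow> fst ((q0#qs)!F (i+1)) < fst ((q0#qs)!F (j+1))) \<and>
     (snd ((p0#ps)!(i+1)) < snd ((p0#ps)!(j+1)) \<longleftrightarrow> snd ((q0#qs)!F (i+1)) < snd ((q0#qs)!F (j+1)))"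
        by (rule cmp2) (use i j lp m_def in auto)
      show "(fst (ps!i) < fst (ps!j) \<longleftrightarrow> fst (qs!f i) < fst (qs!f j)) \<and>
                                      (snd (ps!i) < snd (ps!j) \<longleftrightarrow> snd (qs!f i) < snd (qs!f j))"
        using c conjunct1[OF eqs[OF i]] conjunct1[OF eqs[OF j]] by simp
    qed
  qed
qed

end
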